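(* When the algorithm Classifier is run on any configuration $G$ with $n$ nodes, there exists an iteration $i\in\{1,\ldots,\lceil n/2\rceil\}$ of its main loop in which either the "Yes" condition or the "No" condition holds, so that Classifier terminates with an output.
   Context: A configuration is a finite simple undirected connected graph $G$ with $n$ nodes, each node $v$ having a non-negative integer wakeup tag $t_v$; the span $\sigma$ is the largest tag (the smallest tag being $0$). Algorithm Classifier (centralized, input $G$). It maintains a partition of the nodes into classes, with $\mathrm{class}(v)\in\{1,\ldots,\mathit{numClasses}\}$. Initially all nodes are in class $1$ and $\mathit{numClasses}=1$. One iteration (procedure Partitioner) does: for each node $v$, compute its label $L_v$, the set of triples obtained as follows: for each neighbour $w$ of $v$ with $\mathrm{class}(w)\ne\mathrm{class}(v)$ or $t_w\ne t_v$, form the pair $(\mathrm{class}(w),\sigma+1+t_w-t_v)$; for each distinct pair $(a,b)$ so formed, $L_v$ contains $(a,b,1)$ if exactly one such neighbour yields $(a,b)$ and $(a,b,* )$ if at least two do. Then the partition is refined: two nodes are in the same new class iff they were in the same class before the iteration and have equal labels; classes are renumbered $1,\ldots,\mathit{numClasses}$ with $\mathit{numClasses}$ the new number of classes. Main loop: for $i=1,\ldots,\lceil n/2\rceil$: let $\mathit{old}=\mathit{numClasses}$; perform one iteration; if some class contains exactly one node, output "Yes" and stop (the "Yes" condition); otherwise, if $\mathit{numClasses}=\mathit{old}$, output "No" and stop (the "No" condition). *)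

theory Defs
  imports Main
begin

definition configuration :: "'a set \<Rightarrow> ('a \<Rightarrow> 'a \<Rightarrow> bool) \<Rightarrow> ('a \<Rightarrow> nat) \<Rightarrow> bool" where
  "configuration V E t \<longleftrightarrow>
     finite V \<and> V \<noteq> {} \<and>
     (\<forall>u v. E u v \<longrightarrow> u \<in> V \<and> v \<in> V) \<and>
     (\<forall>u v. E u v \<longrightarrow> E v u) \<and>
     (\<forall>v. \<not> E v v) \<and>
     (\<forall>u\<in>V. \<forall>v\<in>V. E\<^sup>*\<^sup>* u v) \<and>
     (\<exists>v\<in>V. t v = 0)"

definition span :: "'a set \<Rightarrow> ('a \<Rightarrow> nat) \<Rightarrow> nat" where
  "span V t = Max (t ` V)"

datatype mult = One | Many

text \<open>A partition of V is represented by the map sending each node to its class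
  (the set of nodes in its class); the class itself serves as canonical class identifier.\<close>

definition rel_nbrs :: "'a set \<Rightarrow> ('a \<Rightarrow> 'a \<Rightarrow> bool) \<Rightarrow> ('a \<Rightarrow> nat) \<Rightarrow> ('a \<Rightarrow> 'a set) \<Rightarrow> 'a \<Rightarrow> 'a set" where
  "rel_nbrs V E t cls v = {w \<in> V. E v w \<and> (cls w \<noteq> cls v \<or> t w \<noteq> t v)}"

definition nbr_pair :: "'a set \<Rightarrow> ('a \<Rightarrow> nat) \<Rightarrow> ('a \<Rightarrow> 'a set) \<Rightarrow> 'a \<Rightarrow> 'a \<Rightarrow> 'a set \<times> int" where
  "nbr_pair V t cls v w = (cls w, int (span V t) + 1 + int (t w) - int (t v))"

definition label :: "'a set \<Rightarrow> ('a \<Rightarrow> 'a \<Rightarrow> bool) \<Rightarrow> ('a \<Rightarrow> nat) \<Rightarrow> ('a \<Rightarrow> 'a set) \<Rightarrow> 'a \<Rightarrow> ('a set \<times> int \<times> mult) set" where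
  "label V E t cls v =
     {(a, b, m). (\<exists>w \<in> rel_nbrs V E t cls v. nbr_pair V t cls v w = (a, b)) \<and>
        m = (if card {w \<in> rel_nbrs V E t cls v. nbr_pair V t cls v w = (a, b)} = 1
             then One else Many)}"

definition partitioner :: "'a set \<Rightarrow> ('a \<Rightarrow> 'a \<Rightarrow> bool) \<Rightarrow> ('a \<Rightarrow> nat) \<Rightarrow> ('a \<Rightarrow> 'a set) \<Rightarrow> ('a \<Rightarrow> 'a set)" where
  "partitioner V E t cls = (\<lambda>v. {u \<in> V. cls u = cls v \<and> label V E t cls u = label V E t cls v})"

definition classes_after :: "'a set \<Rightarrow> ('a \<Rightarrow> 'a \<Rightarrow> bool) \<Rightarrow> ('a \<Rightarrow> nat) \<Rightarrow> nat \<Rightarrow> ('a \<Rightarrow> 'a set)" where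
  "classes_after V E t k = (partitioner V E t ^^ k) (\<lambda>_. V)"

definition num_classes :: "'a set \<Rightarrow> ('a \<Rightarrow> 'a \<Rightarrow> bool) \<Rightarrow> ('a \<Rightarrow> nat) \<Rightarrow> nat \<Rightarrow> nat" where
  "num_classes V E t k = card (classes_after V E t k ` V)"

definition yes_cond :: "'a set \<Rightarrow> ('a \<Rightarrow> 'a \<Rightarrow> bool) \<Rightarrow> ('a \<Rightarrow> nat) \<Rightarrow> nat \<Rightarrow> bool" where
  "yes_cond V E t i \<longleftrightarrow> (\<exists>v \<in> V. card (classes_after V E t i v) = 1)"

definition no_cond :: "'a set \<Rightarrow> ('a \<Rightarrow> 'a \<Rightarrow> bool) \<Rightarrow> ('a \<Rightarrow> nat) \<Rightarrow> nat \<Rightarrow> bool" where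
  "no_cond V E t i \<longleftrightarrow> num_classes V E t i = num_classes V E t (i - 1)"

end

theory Submission
  imports Defs
begin

definition part_inv :: "'a set \<Rightarrow> ('a \<Rightarrow> 'a set) \<Rightarrow> bool" where
  "part_inv V cls \<longleftrightarrow> (\<forall>v\<in>V. v \<in> cls v \<and> cls v \<subseteq> V \<and> (\<forall>u\<in>V. u \<in> cls v \<longleftrightarrow> cls u = cls v))"

lemma part_inv_init: "part_inv V (\<lambda>_. V)"
  unfolding part_inv_def by auto

lemma part_inv_step: "part_inv V (partitioner V E t cls)"
  unfolding part_inv_def partitioner_def by auto

lemma classes_after_Suc: "classes_after V E t (Suc k) = partitioner V E t (classes_after V E t k)"
  unfolding classes_after_def by simp

lemma part_inv_after: "part_inv V (classes_after V E t k)"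
  by (cases k) (auto simp: classes_after_Suc part_inv_step classes_after_def part_inv_init)

lemma refine_card:
  assumes fin: "finite V"
  shows "card (cls ` V) \<le> card (partitioner V E t cls ` V)"
proof -
  let ?c = "partitioner V E t cls"
  have "cls ` V = (\<lambda>X. \<Union> (cls ` X)) ` (?c ` V)"
  proof -
    have "\<Union> (cls ` ?c v) = cls v" if "v \<in> V" for v
    proof -
      have "v \<in> ?c v" using that unfolding partitioner_def by auto
      moreover have "\<forall>u\<in>?c v. cls u = cls v" unfolding partitioner_def by auto
      ultimately have "cls ` ?c v = {cls v}" by blast
      then show ?thesis by simp
    qed
    then show ?thesis by (auto simp: image_image)
  qed
  then show ?thesis using card_image_le fin by (metis finite_imageI)
qed

lemma count_classes:
  assumes fin: "finite V" and inv: "part_inv V cls" and big: "\<forall>v\<in>V. card (cls v) \<ge> 2"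
  shows "2 * card (cls ` V) \<le> card V"
proof -
  have U: "\<Union> (cls ` V) = V" using inv unfolding part_inv_def by blast
  have pd: "pairwise disjnt (cls ` V)"
    unfolding pairwise_def disjnt_def
  proof (clarify)
    fix u v assume uv: "u \<in> V" "v \<in> V" "cls u \<noteq> cls v"
    show "cls u \<inter> cls v = {}"
    proof (rule ccontr)
      assume "cls u \<inter> cls v \<noteq> {}"
      then obtain w where w: "w \<in> cls u" "w \<in> cls v" by blast
      then have "w \<in> V" using inv uv unfolding part_inv_def by blast
      then have "cls w = cls u" "cls w = cls v" using inv uv w unfolding part_inv_def by blast+
      then show False using uv by simp
    qed
  qed
  have finA: "\<And>A. A \<in> cls ` V \<Longrightarrow> finite A"
    using inv fin unfolding part_inv_def by (auto intro: finite_subset)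
  have "card V = sum card (cls ` V)"
    using card_Union_disjoint[OF pd finA] U by simp
  moreover have "sum card (cls ` V) \<ge> sum (\<lambda>_. 2) (cls ` V)"
    by (rule sum_mono) (use big in auto)
  ultimately show ?thesis by simp
qed

theorem lemma1:
  fixes V :: "'a set" and E :: "'a \<Rightarrow> 'a \<Rightarrow> bool" and t :: "'a \<Rightarrow> nat"
  assumes "configuration V E t"
  shows "\<exists>i \<in> {1..(card V + 1) div 2}. yes_cond V E t i \<or> no_cond V E t i"
proof (rule ccontr)
  assume H: "\<not> ?thesis"
  have fin: "finite V" and ne: "V \<noteq> {}" using assms unfolding configuration_def by auto
  define K where "K = (card V + 1) div 2"
  have n1: "card V \<ge> 1" using fin ne by (simp add: Suc_le_eq card_gt_0_iff)
  have K1: "K \<ge> 1" using n1 unfolding K_def by simp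
  have grow: "k \<le> K \<Longrightarrow> num_classes V E t k \<ge> k + 1" for k
  proof (induction k)
    case 0
    have "classes_after V E t 0 ` V = {V}" using ne unfolding classes_after_def by auto
    then show ?case unfolding num_classes_def by simp
  next
    case (Suc k)
    have "Suc k \<in> {1..K}" using Suc.prems by simp
    then have "\<not> no_cond V E t (Suc k)" using H unfolding K_def by blast
    then have ne: "num_classes V E t (Suc k) \<noteq> num_classes V E t k"
      unfolding no_cond_def by simp
    have "num_classes V E t k \<le> num_classes V E t (Suc k)"
      unfolding num_classes_def classes_after_Suc using refine_card[OF fin] by blast
    then show ?case using Suc ne by linarith
  qed
  have "\<not> yes_cond V E t K" using H K1 unfolding K_def by auto
  then have "\<forall>v\<in>V. card (classes_after V E t K v) \<noteq> 1" unfolding yes_cond_def by blast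
  moreover have "\<forall>v\<in>V. card (classes_after V E t K v) \<ge> 1"
  proof
    fix v assume v: "v \<in> V"
    have "v \<in> classes_after V E t K v" "classes_after V E t K v \<subseteq> V"
      using part_inv_after[of V E t K] v unfolding part_inv_def by auto
    then show "card (classes_after V E t K v) \<ge> 1"
      using fin by (metis One_nat_def Suc_le_eq card_gt_0_iff empty_iff finite_subset)
  qed
  ultimately have "\<forall>v\<in>V. card (classes_after V E t K v) \<ge> 2" by fastforce
  then have "2 * num_classes V E t K \<le> card V"
    unfolding num_classes_def using count_classes[OF fin part_inv_after] by blast
  moreover have "num_classes V E t K \<ge> K + 1" using grow by simp
  ultimately show False unfolding K_def by linarith
qed

end
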